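(* Let $A$ be a subset of the nonnegative real numbers which is well ordered (for the usual order) and which has an accumulation point in $\mathbb R$ for the Euclidean topology. For a positive integer $m$ let $mA=\{x_1+\cdots+x_m\mid x_1,\dots,x_m\in A\}$. Then for every positive integer $m$, $mA$ contains a well ordered subset of ordinal type $\omega^m$.
   Context: $\omega$ denotes the ordinal type of $\mathbb N$ with its usual order. *)

theory Defs
  imports "HOL-Analysis.Analysis"
begin

definition well_ordered_set :: "real set \<Rightarrow> bool" where
  "well_ordered_set A \<longleftrightarrow> (\<forall>S. S \<subseteq> A \<longrightarrow> S \<noteq> {} \<longrightarrow> (\<exists>x\<in>S. \<forall>y\<in>S. x \<le> y))"

definition sumset :: "nat \<Rightarrow> real set \<Rightarrow> real set" where
  "sumset m A = {sum_list xs | xs. length xs = m \<and> set xs \<subseteq> A}"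

text \<open>The ordinal omega^m, realised as the m-tuples of naturals (lists of length m)
  ordered lexicographically with the first coordinate most significant.\<close>
definition omega_pow :: "nat \<Rightarrow> nat list set" where
  "omega_pow m = {xs. length xs = m}"

definition omega_pow_less :: "nat list \<Rightarrow> nat list \<Rightarrow> bool" where
  "omega_pow_less xs ys \<longleftrightarrow> (xs, ys) \<in> lex {(a, b). a < b}"

definition has_type_omega_pow :: "real set \<Rightarrow> nat \<Rightarrow> bool" where
  "has_type_omega_pow B m \<longleftrightarrow>
     (\<exists>f. bij_betw f (omega_pow m) B \<and>
          (\<forall>xs\<in>omega_pow m. \<forall>ys\<in>omega_pow m. omega_pow_less xs ys \<longleftrightarrow> f xs < f ys))"

end

theory Submission
  imports Defs
begin

lemma approx_below:
  fixes A :: "real set"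
  assumes wo: "well_ordered_set A" and lp: "x islimpt A" and e: "e > 0"
  shows "\<exists>y\<in>A. x - e < y \<and> y < x"
proof (rule ccontr)
  assume H: "\<not> ?thesis"
  obtain z where z: "z \<in> A" "z \<noteq> x" "dist z x < e"
    using lp e unfolding islimpt_approachable by blast
  have "z > x" using H z by (auto simp: dist_real_def)
  define S where "S = A \<inter> {x<..<x+e}"
  have "z \<in> S" using z \<open>z > x\<close> by (auto simp: S_def dist_real_def)
  then obtain y where y: "y \<in> S" "\<forall>w\<in>S. y \<le> w"
    using wo unfolding well_ordered_set_def S_def by (metis Int_lower1 empty_iff)
  have yx: "y > x" "y < x + e" "y \<in> A" using y(1) by (auto simp: S_def)
  obtain w where w: "w \<in> A" "w \<noteq> x" "dist w x < y - x"
    using lp yx unfolding islimpt_approachable by (metis diff_gt_0_iff_gt)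
  show False
  proof (cases "w < x")
    case True
    then show ?thesis using H w yx by (auto simp: dist_real_def)
  next
    case False
    then have "w \<in> S" "w < y" using w yx by (auto simp: S_def dist_real_def)
    then show ?thesis using y by force
  qed
qed

lemma lex_I: "(x,y) \<in> r \<Longrightarrow> length xs' = length ys' \<Longrightarrow> (pre @ x # xs', pre @ y # ys') \<in> lex r"
  unfolding lex_conv mem_Collect_eq prod.case
  by (intro conjI exI[of _ pre] exI[of _ x] exI[of _ y] exI[of _ xs'] exI[of _ ys']) auto

fun F :: "(nat \<Rightarrow> real) \<Rightarrow> nat list \<Rightarrow> nat \<Rightarrow> real" where
  "F b [] s = 0"
| "F b (k#ks) s = b (s+k) + F b ks (s+k)"

fun G :: "(nat \<Rightarrow> real) \<Rightarrow> nat list \<Rightarrow> nat \<Rightarrow> real list" where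
  "G b [] s = []"
| "G b (k#ks) s = b (s+k) # G b ks (s+k)"

lemma G_props: "length (G b ks s) = length ks \<and> sum_list (G b ks s) = F b ks s
   \<and> set (G b ks s) \<subseteq> range b"
  by (induction ks arbitrary: s) auto

lemma F_lower: assumes "mono b" shows "real (length ks) * b s \<le> F b ks s"
proof (induction ks arbitrary: s)
  case Nil then show ?case by simp
next
  case (Cons k ks)
  have "b s \<le> b (s+k)" using assms by (simp add: monoD)
  moreover have "real (length ks) * b s \<le> real (length ks) * b (s+k)"
    using \<open>b s \<le> b (s+k)\<close> by (simp add: mult_left_mono)
  moreover have "real (length ks) * b (s+k) \<le> F b ks (s+k)" using Cons by blast
  ultimately show ?case by (simp add: algebra_simps)
qed

lemma F_upper: assumes "\<And>n. b n < x" shows "F b ks s \<le> real (length ks) * x"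
proof (induction ks arbitrary: s)
  case Nil then show ?case by simp
next
  case (Cons k ks)
  have "b (s+k) < x" "F b ks (s+k) \<le> real (length ks) * x" using assms[of "s+k"] Cons[of "s+k"] by auto
  then show ?case by (simp add: algebra_simps)
qed

lemma F_append: "F b (u @ r) s = F b u s + F b r (s + sum_list u)"
  by (induction u arbitrary: s) (auto simp: add.assoc)

theorem mainTheorem4:
  fixes A :: "real set" and m :: nat
  assumes "A \<subseteq> {0..}"
    and "well_ordered_set A"
    and "\<exists>x::real. x islimpt A"
    and "m \<ge> 1"
  shows "\<exists>B. B \<subseteq> sumset m A \<and> well_ordered_set B \<and> has_type_omega_pow B m"
proof -
  obtain x where lp: "x islimpt A" using assms(3) by blast
  have ap: "\<And>e. e > 0 \<Longrightarrow> \<exists>y\<in>A. x - e < y \<and> y < x"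
    using approx_below[OF assms(2) lp] by blast
  define c :: real where "c = real m + 1"
  have c: "c \<ge> 2" using assms(4) by (simp add: c_def)
  define b where "b = rec_nat (SOME y. y \<in> A \<and> x - 1 < y \<and> y < x)
     (\<lambda>n bn. SOME y. y \<in> A \<and> x - (x - bn)/c < y \<and> y < x)"
  have b0: "b 0 = (SOME y. y \<in> A \<and> x - 1 < y \<and> y < x)" by (simp add: b_def)
  have bS: "\<And>n. b (Suc n) = (SOME y. y \<in> A \<and> x - (x - b n)/c < y \<and> y < x)"
    by (simp add: b_def)
  have P: "b n \<in> A \<and> b n < x" for n
  proof (induction n)
    case 0
    from ap[of 1] have "\<exists>y. y \<in> A \<and> x - 1 < y \<and> y < x" by auto
    from someI_ex[OF this] show ?case by (simp add: b0)
  next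
    case (Suc n)
    have "(x - b n)/c > 0" using Suc c by auto
    from ap[OF this] have "\<exists>y. y \<in> A \<and> x - (x - b n)/c < y \<and> y < x" by auto
    from someI_ex[OF this] show ?case by (simp add: bS)
  qed
  have Q: "(x - b (Suc n)) * c < x - b n" for n
  proof -
    have "(x - b n)/c > 0" using P[of n] c by auto
    from ap[OF this] have "\<exists>y. y \<in> A \<and> x - (x - b n)/c < y \<and> y < x" by auto
    from someI_ex[OF this] have "x - (x - b n)/c < b (Suc n)" by (simp add: bS)
    then show ?thesis using c by (simp add: field_simps)
  qed
  have inc: "b n < b (Suc n)" for n
  proof -
    have "(x - b (Suc n)) * c \<ge> (x - b (Suc n)) * 1"
      using P[of "Suc n"] c by (intro mult_left_mono) auto
    then show ?thesis using Q[of n] by simp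
  qed
  have monob: "mono b" using inc by (simp add: mono_iff_le_Suc less_imp_le)
  have bx: "\<And>n. b n < x" using P by blast
  have step: "F b (a # k') s < F b (d # l') s"
    if "a < d" "length k' = length l'" "length k' < m" for a d k' l' s
  proof -
    let ?p = "s + a" and ?n = "real (length k')"
    have "F b k' ?p \<le> ?n * x" using F_upper[OF bx] by simp
    have "?n * b (Suc ?p) \<le> ?n * b (s+d)"
      using that monob by (intro mult_left_mono) (auto simp: monoD)
    moreover have "?n * b (s+d) \<le> F b l' (s+d)" using F_lower[OF monob] that(2) by metis
    moreover have "b (Suc ?p) \<le> b (s+d)" using that monob by (auto simp: monoD)
    moreover have "(?n + 1) * (x - b (Suc ?p)) < x - b ?p"
    proof -
      have "(?n + 1) * (x - b (Suc ?p)) \<le> c * (x - b (Suc ?p))"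
        using that bx[of "Suc ?p"] by (intro mult_right_mono) (auto simp: c_def)
      then show ?thesis using Q[of ?p] by (simp add: mult.commute)
    qed
    ultimately show ?thesis using \<open>F b k' ?p \<le> ?n * x\<close>
      by (simp add: algebra_simps)
  qed
  define f where "f = (\<lambda>ks. F b ks 0)"
  define r where "r = {(a, d). (a::nat) < d}"
  have fmono: "f k < f l" if "(k, l) \<in> lex r" "length k = m" for k l
  proof -
    have "\<exists>u a d k' l'. k = u @ a # k' \<and> l = u @ d # l' \<and> a < d \<and> length k = length l"
      using that(1) unfolding lex_conv r_def by blast
    then obtain u a d k' l' where kl: "k = u @ a # k'" "l = u @ d # l'" "a < d"
      "length k = length l" by blast
    have "length k' = length l'" "length k' < m" using kl that(2) by auto
    from step[OF kl(3) this, of "0 + sum_list u"]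
    show ?thesis unfolding f_def kl F_append by simp
  qed
  have tot: "(k, l) \<in> lex r \<or> (l, k) \<in> lex r" if len: "length k = length l" and ne: "k \<noteq> l" for k l
  proof -
    obtain pre a k' d l' where kl: "a \<noteq> d" "k = pre @ [a] @ k'" "l = pre @ [d] @ l'"
      using same_length_different[OF ne len] by blast
    show ?thesis
    proof (cases "a < d")
      case True
      have "length k' = length l'" using len kl by simp
      then have "(k,l) \<in> lex r" unfolding kl r_def using True by (simp add: lex_I)
      then show ?thesis ..
    next
      case False
      then have "d < a" using kl by simp
      have "length l' = length k'" using len kl by simp
      then have "(l,k) \<in> lex r" unfolding kl r_def using \<open>d < a\<close> by (simp add: lex_I)
      then show ?thesis ..
    qed
  qed
  have iff: "omega_pow_less k l \<longleftrightarrow> f k < f l" if "k \<in> omega_pow m" "l \<in> omega_pow m" for k l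
  proof
    assume "omega_pow_less k l"
    then show "f k < f l" using fmono that by (auto simp: omega_pow_less_def r_def omega_pow_def)
  next
    assume fl: "f k < f l"
    show "omega_pow_less k l"
    proof (rule ccontr)
      assume "\<not> omega_pow_less k l"
      then have nl: "(k, l) \<notin> lex r" by (simp add: omega_pow_less_def r_def)
      have "k \<noteq> l" using fl by auto
      then have "(l, k) \<in> lex r" using tot[of k l] nl that by (auto simp: omega_pow_def)
      then have "f l < f k" using fmono that by (auto simp: omega_pow_def)
      then show False using fl by simp
    qed
  qed
  have injf: "inj_on f (omega_pow m)"
  proof (rule inj_onI)
    fix k l assume kl: "k \<in> omega_pow m" "l \<in> omega_pow m" "f k = f l"
    show "k = l"
    proof (rule ccontr)
      assume "k \<noteq> l"
      then have "(k, l) \<in> lex r \<or> (l, k) \<in> lex r" using tot kl by (auto simp: omega_pow_def)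
      moreover have "length k = m" "length l = m" using kl by (auto simp: omega_pow_def)
      ultimately show False using fmono[of k l] fmono[of l k] kl(3) by auto
    qed
  qed
  define B where "B = f ` omega_pow m"
  have sub: "B \<subseteq> sumset m A"
  proof
    fix y assume "y \<in> B"
    then obtain k where k: "length k = m" "y = f k" by (auto simp: B_def omega_pow_def)
    have "set (G b k 0) \<subseteq> A" using G_props[of b k 0] P by auto
    then show "y \<in> sumset m A" using G_props[of b k 0] k
      unfolding sumset_def f_def by (intro CollectI exI[of _ "G b k 0"]) auto
  qed
  have wfr: "wf (lex r)" unfolding r_def using wf_less by blast
  have wo: "well_ordered_set B" unfolding well_ordered_set_def
  proof (intro allI impI)
    fix S assume S: "S \<subseteq> B" "S \<noteq> {}"
    define T where "T = {k \<in> omega_pow m. f k \<in> S}"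
    obtain k0 where "k0 \<in> T" using S unfolding T_def B_def by blast
    then obtain z where z: "z \<in> T" "\<And>y. (y, z) \<in> lex r \<Longrightarrow> y \<notin> T"
      using wf_not_refl wfr by (metis wfE_min)
    show "\<exists>x\<in>S. \<forall>y\<in>S. x \<le> y"
    proof (intro bexI[of _ "f z"] ballI)
      fix y assume "y \<in> S"
      then obtain k where k: "k \<in> T" "y = f k" using S unfolding T_def B_def by blast
      show "f z \<le> y"
      proof (cases "k = z")
        case False
        then have "(k, z) \<in> lex r \<or> (z, k) \<in> lex r" using tot k z by (auto simp: T_def omega_pow_def)
        then have "(z, k) \<in> lex r" using z k by blast
        then show ?thesis using fmono k z by (auto simp: T_def omega_pow_def less_imp_le)
      qed (use k in simp)
    qed (use z in \<open>simp add: T_def\<close>)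
  qed
  have "has_type_omega_pow B m" unfolding has_type_omega_pow_def
    using injf iff by (auto simp: B_def bij_betw_def)
  then show ?thesis using sub wo by blast
qed

end
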